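(* Suppose $1/n\ll\varepsilon_3\ll1$. Let $G$ be a digraph on $n$ vertices with $\delta^0(G)\geq n/2$ and let $A,B,S,T$ be a partition of $V(G)$ satisfying the $AB$-conditions, with sizes $a,b,s,t$ and $b=a+d$ for some $d>0$. Then $E(B\cup T,B)$ contains a matching of size $d+2$, i.e. $d+2$ pairwise vertex-disjoint edges each going from $B\cup T$ to $B$.
   Context: Digraphs have no loops and at most one edge in each direction between two vertices; $\delta^0$ is the minimum semidegree; $E(X,Y)$ is the set of edges $xy$ with $x\in X,y\in Y$. $d^+_X(x)=|N^+(x)\cap X|$, $d^-_X(x)=|N^-(x)\cap X|$, $d^\pm_X(x)\geq c$ means both $\geq c$ and $d^\pm_X(x)<c$ means both $<c$. $G[A,B]$ is the digraph on $A\cup B$ with edges of $G$ between $A$ and $B$ in either direction. The $AB$-conditions on a partition $A,B,S,T$ of sizes $a,b,s,t$: $a\leq b$, $s\leq t$; $\lfloor n/2\rfloor-\varepsilon_3 n\leq a,b\leq\lceil n/2\rceil+\varepsilon_3n$; $\delta^0(G[A,B])\geq n/50$; $d^\pm_B(x)\geq n/2-\varepsilon_3n$ for all but at most $\varepsilon_3n$ vertices $x\in A$; $d^\pm_A(x)\geq n/2-\varepsilon_3n$ for all but at most $\varepsilon_3n$ vertices $x\in B$; $s+t\leq\varepsilon_3n$; $d^-_A(x),d^+_B(x)\geq n/50$ for all $x\in S$; $d^-_B(x),d^+_A(x)\geq n/50$ for all $x\in T$; if $a<b$ then $d^\pm_B(x)<n/20$ for all $x\in B$, $d^-_B(x)<n/20$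 for all $x\in S$ and $d^+_B(x)<n/20$ for all $x\in T$. The hierarchy $\alpha\ll\beta$ means $\alpha$ is sufficiently small as a function of $\beta$. *)

theory Defs
  imports Complex_Main
begin

text \<open>A digraph: finite vertex set V and edge set E \<subseteq> V \<times> V without loops.
  Using a set of ordered pairs gives at most one edge in each direction.\<close>
definition digraph :: "'a set \<Rightarrow> ('a \<times> 'a) set \<Rightarrow> bool" where
  "digraph V E \<longleftrightarrow> finite V \<and> E \<subseteq> V \<times> V \<and> (\<forall>x. (x, x) \<notin> E)"

definition outdeg_in :: "('a \<times> 'a) set \<Rightarrow> 'a set \<Rightarrow> 'a \<Rightarrow> nat" where
  "outdeg_in E X x = card {y \<in> X. (x, y) \<in> E}"

definition indeg_in :: "('a \<times> 'a) set \<Rightarrow> 'a set \<Rightarrow> 'a \<Rightarrow> nat" where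
  "indeg_in E X x = card {y \<in> X. (y, x) \<in> E}"

definition min_semideg_ge :: "'a set \<Rightarrow> ('a \<times> 'a) set \<Rightarrow> real \<Rightarrow> bool" where
  "min_semideg_ge V E c \<longleftrightarrow>
     (\<forall>x\<in>V. real (outdeg_in E V x) \<ge> c \<and> real (indeg_in E V x) \<ge> c)"

definition bip_edges :: "('a \<times> 'a) set \<Rightarrow> 'a set \<Rightarrow> 'a set \<Rightarrow> ('a \<times> 'a) set" where
  "bip_edges E A B = {(x, y) \<in> E. (x \<in> A \<and> y \<in> B) \<or> (x \<in> B \<and> y \<in> A)}"

definition partition4 :: "'a set \<Rightarrow> 'a set \<Rightarrow> 'a set \<Rightarrow> 'a set \<Rightarrow> 'a set \<Rightarrow> bool" where
  "partition4 V A B S T \<longleftrightarrow> A \<union> B \<union> S \<union> T = V \<and>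
     A \<inter> B = {} \<and> A \<inter> S = {} \<and> A \<inter> T = {} \<and> B \<inter> S = {} \<and> B \<inter> T = {} \<and> S \<inter> T = {}"

definition AB_conditions ::
  "real \<Rightarrow> 'a set \<Rightarrow> ('a \<times> 'a) set \<Rightarrow> 'a set \<Rightarrow> 'a set \<Rightarrow> 'a set \<Rightarrow> 'a set \<Rightarrow> bool" where
  "AB_conditions eps V E A B S T \<longleftrightarrow>
    (let n = real (card V); a = card A; b = card B; s = card S; t = card T;
         AB = A \<union> B; EAB = bip_edges E A B in
     partition4 V A B S T \<and>
     a \<le> b \<and> s \<le> t \<and>
     real_of_int \<lfloor>n / 2\<rfloor> - eps * n \<le> real a \<and> real a \<le> real_of_int \<lceil>n / 2\<rceil> + eps * n \<and>
     real_of_int \<lfloor>n / 2\<rfloor> - eps * n \<le> real b \<and> real b \<le> real_of_int \<lceil>n / 2\<rceil> + eps * n \<and>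
     (\<forall>x\<in>AB. real (outdeg_in EAB AB x) \<ge> n / 50 \<and> real (indeg_in EAB AB x) \<ge> n / 50) \<and>
     real (card {x \<in> A. \<not> (real (outdeg_in E B x) \<ge> n / 2 - eps * n \<and>
                             real (indeg_in E B x) \<ge> n / 2 - eps * n)}) \<le> eps * n \<and>
     real (card {x \<in> B. \<not> (real (outdeg_in E A x) \<ge> n / 2 - eps * n \<and>
                             real (indeg_in E A x) \<ge> n / 2 - eps * n)}) \<le> eps * n \<and>
     real (s + t) \<le> eps * n \<and>
     (\<forall>x\<in>S. real (indeg_in E A x) \<ge> n / 50 \<and> real (outdeg_in E B x) \<ge> n / 50) \<and>
     (\<forall>x\<in>T. real (indeg_in E B x) \<ge> n / 50 \<and> real (outdeg_in E A x) \<ge> n / 50) \<and>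
     (a < b \<longrightarrow>
        (\<forall>x\<in>B. real (outdeg_in E B x) < n / 20 \<and> real (indeg_in E B x) < n / 20) \<and>
        (\<forall>x\<in>S. real (indeg_in E B x) < n / 20) \<and>
        (\<forall>x\<in>T. real (outdeg_in E B x) < n / 20)))"

definition matching_in :: "('a \<times> 'a) set \<Rightarrow> 'a set \<Rightarrow> 'a set \<Rightarrow> ('a \<times> 'a) set \<Rightarrow> bool" where
  "matching_in E X Y M \<longleftrightarrow>
     M \<subseteq> E \<and> (\<forall>(x, y)\<in>M. x \<in> X \<and> y \<in> Y) \<and>
     (\<forall>e\<in>M. \<forall>f\<in>M. e \<noteq> f \<longrightarrow> {fst e, snd e} \<inter> {fst f, snd f} = {})"

end

theory Submission
  imports Defs
begin

lemma card_filter_sum: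
  assumes "finite Y"
  shows "card {y\<in>Y. P y} = (\<Sum>y\<in>Y. if P y then 1 else (0::nat))"
proof -
  have "(\<Sum>y\<in>Y. if P y then 1 else (0::nat)) = (\<Sum>y\<in>{y\<in>Y. P y}. 1)"
    by (rule sum.inter_filter[OF assms, symmetric])
  then show ?thesis by simp
qed

lemma double_count:
  assumes "finite X" "finite Y"
  shows "(\<Sum>x\<in>X. card {y\<in>Y. R y x}) = (\<Sum>y\<in>Y. card {x\<in>X. R y x})"
proof -
  have "(\<Sum>x\<in>X. card {y\<in>Y. R y x}) = (\<Sum>x\<in>X. \<Sum>y\<in>Y. if R y x then 1 else (0::nat))"
    by (intro sum.cong refl card_filter_sum assms)
  also have "\<dots> = (\<Sum>y\<in>Y. \<Sum>x\<in>X. if R y x then 1 else (0::nat))"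
    by (rule sum.swap)
  also have "\<dots> = (\<Sum>y\<in>Y. card {x\<in>X. R y x})"
    by (intro sum.cong refl card_filter_sum[symmetric] assms)
  finally show ?thesis .
qed

lemma matching_ext:
  assumes "matching_in E X Y M" "finite M" "e \<in> E" "fst e \<in> X" "snd e \<in> Y"
    "fst e \<notin> fst ` M \<union> snd ` M" "snd e \<notin> fst ` M \<union> snd ` M"
  shows "matching_in E X Y (insert e M) \<and> finite (insert e M) \<and> card (insert e M) = Suc (card M)"
proof -
  have "e \<notin> M"
  proof
    assume "e \<in> M" then have "fst e \<in> fst ` M" by auto
    then show False using assms(6) by blast
  qed
  moreover have "matching_in E X Y (insert e M)"
    unfolding matching_in_def
  proof (intro conjI ballI impI)
    show "insert e M \<subseteq> E" using assms(1,3) unfolding matching_in_def by blast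
  next
    fix p assume "p \<in> insert e M"
    then show "case p of (x, y) \<Rightarrow> x \<in> X \<and> y \<in> Y"
      using assms(1,4,5) unfolding matching_in_def by (cases p) auto
  next
    fix f g assume f: "f \<in> insert e M" and g: "g \<in> insert e M" and fg: "f \<noteq> g"
    have M: "\<forall>e\<in>M. \<forall>f\<in>M. e \<noteq> f \<longrightarrow> {fst e, snd e} \<inter> {fst f, snd f} = {}"
      using assms(1) unfolding matching_in_def by blast
    have W: "\<And>h. h \<in> M \<Longrightarrow> fst h \<noteq> fst e \<and> fst h \<noteq> snd e \<and> snd h \<noteq> fst e \<and> snd h \<noteq> snd e"
    proof -
      fix h assume "h \<in> M"
      then have "fst h \<in> fst ` M \<union> snd ` M" "snd h \<in> fst ` M \<union> snd ` M" by auto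
      then show "fst h \<noteq> fst e \<and> fst h \<noteq> snd e \<and> snd h \<noteq> fst e \<and> snd h \<noteq> snd e"
        using assms(6,7) by metis
    qed
    show "{fst f, snd f} \<inter> {fst g, snd g} = {}"
    proof (cases "f = e")
      case True
      then have "g \<in> M" using g fg by auto
      then show ?thesis using W[of g] True by auto
    next
      case False
      then have fM: "f \<in> M" using f by auto
      show ?thesis
      proof (cases "g = e")
        case True then show ?thesis using W[OF fM] by auto
      next
        case False then have "g \<in> M" using g by auto
        then show ?thesis using M fM fg by blast
      qed
    qed
  qed
  ultimately show ?thesis using assms(2) by simp
qed


lemma main_lemma:
  fixes V :: "'a set" and d :: nat and eps :: real
  assumes dig: "digraph V E" and nV: "card V \<ge> 200"
    and msd: "min_semideg_ge V E (real (card V) / 2)"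
    and ab: "AB_conditions eps V E A B S T"
    and eps: "0 < eps" "eps \<le> 1/100"
    and bd: "card B = card A + d" "d > 0"
  shows "\<exists>M. matching_in E (B \<union> T) B M \<and> finite M \<and> card M = d + 2"
proof -
  define n where "n = real (card V)"
  have altb: "card A < card B" using bd by simp
  from ab altb have part: "partition4 V A B S T"
    and ale: "real_of_int \<lfloor>n/2\<rfloor> - eps*n \<le> real (card A)"
    and st: "real (card S + card T) \<le> eps * n"
    and sle: "card S \<le> card T"
    and Bout: "\<forall>x\<in>B. real (outdeg_in E B x) < n/20"
    and Tout: "\<forall>x\<in>T. real (outdeg_in E B x) < n/20"
    unfolding AB_conditions_def Let_def n_def by auto
  have finV: "finite V" and Esub: "E \<subseteq> V \<times> V" using dig unfolding digraph_def by auto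
  have subs: "A \<subseteq> V" "B \<subseteq> V" "S \<subseteq> V" "T \<subseteq> V" using part unfolding partition4_def by auto
  have fins: "finite A" "finite B" "finite S" "finite T" using subs finV by (meson finite_subset)+
  have ncard: "card V = card A + card B + card S + card T"
  proof -
    have V: "V = ((A \<union> B) \<union> S) \<union> T" using part unfolding partition4_def by auto
    have d1: "(A \<union> B) \<inter> S = {}" "((A \<union> B) \<union> S) \<inter> T = {}" "A \<inter> B = {}"
      using part unfolding partition4_def by auto
    show ?thesis unfolding V
      using fins d1 by (simp add: card_Un_disjoint)
  qed
  have n_eq: "n = real (card A) + real (card B) + real (card S) + real (card T)"
    unfolding n_def ncard by simp
  have key: "real d / 2 \<le> real (card {y\<in>B\<union>T. (y,x)\<in>E})" if x: "x \<in> B" for x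
  proof -
    have "{y\<in>V. (y,x)\<in>E} \<subseteq> A \<union> S \<union> {y\<in>B\<union>T. (y,x)\<in>E}"
      using part unfolding partition4_def by auto
    then have "indeg_in E V x \<le> card (A \<union> S \<union> {y\<in>B\<union>T. (y,x)\<in>E})"
      unfolding indeg_in_def using fins by (intro card_mono) auto
    also have "\<dots> \<le> card (A \<union> S) + card {y\<in>B\<union>T. (y,x)\<in>E}" by (rule card_Un_le)
    also have "\<dots> \<le> card A + card S + card {y\<in>B\<union>T. (y,x)\<in>E}" using card_Un_le[of A S] by simp
    finally have i1: "real (indeg_in E V x) \<le> real (card A) + real (card S) + real (card {y\<in>B\<union>T. (y,x)\<in>E})"
      by linarith
    have i2: "n/2 \<le> real (indeg_in E V x)" using msd x subs unfolding min_semideg_ge_def n_def by auto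
    have "real (card B) = real (card A) + real d" using bd by simp
    moreover have "real (card S) \<le> real (card T)" using sle by simp
    ultimately show ?thesis using i1 i2 n_eq by linarith
  qed
  have n200: "n \<ge> 200" using nV unfolding n_def by simp
  have epsn: "eps * n \<le> n/100" using eps n200 mult_right_mono[of eps "1/100" n] by simp
  have fl: "n/2 - 1 \<le> real_of_int \<lfloor>n/2\<rfloor>" using floor_correct[of "n/2"] by linarith
  have st': "real (card S) + real (card T) \<le> n/100" using st epsn by simp
  have ab': "real (card B) = real (card A) + real d" using bd by simp
  have dpos: "real d \<ge> 0" by simp
  have bge: "real (card B) \<ge> 99*n/200" using n_eq st' ab' dpos by linarith
  have dle: "real d \<le> 2 + n/50" using n_eq st' epsn ale fl ab' by linarith
  have step: "\<exists>e\<in>E. fst e \<in> B\<union>T \<and> snd e \<in> B \<and> fst e \<notin> fst ` M \<union> snd ` M \<and> snd e \<notin> fst ` M \<union> snd ` M"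
    if M: "matching_in E (B\<union>T) B M" "finite M" "card M \<le> d+1" for M
  proof (rule ccontr)
    define W where "W = fst ` M \<union> snd ` M"
    assume no: "\<not> ?thesis"
    have no': "\<forall>e\<in>E. \<not> (fst e \<in> B\<union>T \<and> snd e \<in> B \<and> fst e \<notin> W \<and> snd e \<notin> W)"
      using no unfolding W_def by blast
    have touch: "y \<in> W \<or> x \<in> W" if "(y,x) \<in> E" "y \<in> B\<union>T" "x \<in> B" for x y
      using bspec[OF no' that(1)] that(2,3) by auto
    have finW: "finite W" unfolding W_def using M by auto
    have "card W \<le> card (fst ` M) + card (snd ` M)" unfolding W_def by (rule card_Un_le)
    also have "\<dots> \<le> card M + card M" using card_image_le[OF M(2), of fst] card_image_le[OF M(2), of snd] by simp
    finally have cW: "card W \<le> 2*(d+1)" using M(3) by simp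
    define Y where "Y = W \<inter> (B\<union>T)"
    have finY: "finite Y" unfolding Y_def using finW by simp
    have cY: "card Y \<le> card W" unfolding Y_def using finW by (intro card_mono) auto
    have sub: "{y\<in>B\<union>T. (y,x)\<in>E} \<subseteq> {y\<in>Y. (y,x)\<in>E}" if "x \<in> B - W" for x
      using touch that unfolding Y_def by auto
    have lower: "real (card (B-W)) * (real d/2) \<le> (\<Sum>x\<in>B-W. real (card {y\<in>Y. (y,x)\<in>E}))"
    proof (rule sum_bounded_below)
      fix x assume x: "x \<in> B - W"
      have "card {y\<in>B\<union>T. (y,x)\<in>E} \<le> card {y\<in>Y. (y,x)\<in>E}"
        using sub[OF x] finY by (intro card_mono) auto
      then show "real d/2 \<le> real (card {y\<in>Y. (y,x)\<in>E})" using key[of x] x by simp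
    qed
    have eq: "(\<Sum>x\<in>B-W. card {y\<in>Y. (y,x)\<in>E}) = (\<Sum>y\<in>Y. card {x\<in>B-W. (y,x)\<in>E})"
      using fins finY by (intro double_count) auto
    have upper: "(\<Sum>y\<in>Y. real (card {x\<in>B-W. (y,x)\<in>E})) \<le> real (card Y) * (n/20)"
    proof (rule sum_bounded_above)
      fix y assume y: "y \<in> Y"
      have "card {x\<in>B-W. (y,x)\<in>E} \<le> outdeg_in E B y"
        unfolding outdeg_in_def using fins by (intro card_mono) auto
      moreover have "real (outdeg_in E B y) < n/20" using y Bout Tout unfolding Y_def by auto
      ultimately show "real (card {x\<in>B-W. (y,x)\<in>E}) \<le> n/20" by simp
    qed
    have eqr: "(\<Sum>x\<in>B-W. real (card {y\<in>Y. (y,x)\<in>E})) = (\<Sum>y\<in>Y. real (card {x\<in>B-W. (y,x)\<in>E}))"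
      using arg_cong[OF eq, of real] by simp
    have cBW: "real (card (B - W)) \<ge> real (card B) - real (card W)"
      using diff_card_le_card_Diff[OF finW, of B] by linarith
    have cWr: "real (card W) \<le> 2 * (real d + 1)" using cW by simp
    have cYr: "real (card Y) \<le> real (card W)" using cY by simp
    have d0: "real d \<ge> 1" using bd by simp
    have "(real (card B) - 2*(real d + 1)) * (real d/2) \<le> real (card (B-W)) * (real d/2)"
      using cBW cWr d0 by (intro mult_right_mono) auto
    also have "\<dots> \<le> real (card Y) * (n/20)" using lower eqr upper by linarith
    also have "\<dots> \<le> (2 * (real d + 1)) * (n/20)" using cYr cWr n200 by (intro mult_right_mono) auto
    also have "\<dots> \<le> (real d * 4) * (n/20)" using d0 n200 by (intro mult_right_mono) auto
    finally have F: "(real (card B) - 2*(real d + 1)) * (real d/2) \<le> (real d * 4) * (n/20)" .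
    have id: "(2 * n / 5) * (real d/2) = (real d * 4) * (n/20)" by (simp add: field_simps)
    show False
    proof (cases "real (card B) - 2*(real d + 1) \<le> 2 * n / 5")
      case True then show False using bge dle n200 by argo
    next
      case False
      then have "(2 * n / 5) * (real d/2) < (real (card B) - 2*(real d + 1)) * (real d/2)"
        using d0 by (intro mult_strict_right_mono) auto
      then show False using F id by linarith
    qed
  qed
  have "\<exists>M. matching_in E (B \<union> T) B M \<and> finite M \<and> card M = k" if "k \<le> d+2" for k
    using that
  proof (induction k)
    case 0
    have "matching_in E (B \<union> T) B {}" unfolding matching_in_def by simp
    then show ?case by auto
  next
    case (Suc k)
    then obtain M where M: "matching_in E (B \<union> T) B M" "finite M" "card M = k" by auto
    then obtain e where e: "e \<in> E" "fst e \<in> B\<union>T" "snd e \<in> B" "fst e \<notin> fst ` M \<union> snd ` M"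
      "snd e \<notin> fst ` M \<union> snd ` M" using step[of M] Suc.prems by auto
    show ?case using matching_ext[OF M(1,2) e] M(3) by blast
  qed
  then show ?thesis by simp
qed

theorem proposition6p2:
  "\<exists>eps0 > 0. \<forall>eps3. 0 < eps3 \<and> eps3 \<le> eps0 \<longrightarrow>
     (\<exists>N. \<forall>(V :: nat set) E A B S T (d :: nat).
        digraph V E \<and> card V \<ge> N \<and>
        min_semideg_ge V E (real (card V) / 2) \<and>
        AB_conditions eps3 V E A B S T \<and>
        card B = card A + d \<and> d > 0 \<longrightarrow>
        (\<exists>M. matching_in E (B \<union> T) B M \<and> finite M \<and> card M = d + 2))"
proof (intro exI[of _ "1/100"] conjI allI impI)
  fix eps3 :: real assume e: "0 < eps3 \<and> eps3 \<le> 1/100"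
  show "\<exists>N. \<forall>(V :: nat set) E A B S T (d :: nat).
        digraph V E \<and> card V \<ge> N \<and>
        min_semideg_ge V E (real (card V) / 2) \<and>
        AB_conditions eps3 V E A B S T \<and>
        card B = card A + d \<and> d > 0 \<longrightarrow>
        (\<exists>M. matching_in E (B \<union> T) B M \<and> finite M \<and> card M = d + 2)"
    using main_lemma e by (intro exI[of _ 200]) blast
qed simp

end
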